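(* For the step set $\mathcal B$, $$Q_{\mathcal B}(x,0,\tfrac12)=\sum_{n\ge0}\frac{M_n}{2^n}x^n=2\sum_{n\ge0}\Big(-\frac x2\Big)^n\sum_{k=0}^{n+1}\binom{n+1}{k}\big(2^{n+k+2}-1\big)B_{n+k+2},$$ where $(M_n)_{n\ge0}=(1,2,8,56,608,\dots)$ is the sequence of median Genocchi numbers.
   Context: Let $\mathbb N=\{0,1,2,\dots\}$ and $\mathcal B=\{(-1,1),(0,1),(1,0),(1,-1)\}$. $\#_{\mathcal B}\{(0,0)\xrightarrow{n}(i,j)\}$ is the number of sequences $p_0=(0,0),p_1,\dots,p_n=(i,j)$ of points of $\mathbb N^2$ with $p_m-p_{m-1}\in\mathcal B$, and $Q_{\mathcal B}(x,0,\tfrac12)=\sum_{i\ge0}\big(\sum_{n\ge0}\#_{\mathcal B}\{(0,0)\xrightarrow{n}(i,0)\}2^{-n}\big)x^i$ (the inner series converge). Bernoulli numbers: $\sum_{n\ge0}B_n\frac{x^n}{n!}=\frac{x}{e^x-1}$. The median Genocchi numbers are OEIS sequence A005439; equivalently $M_{n}=2(-1)^{n}\sum_{k=0}^{n+1}\binom{n+1}{k}(2^{n+k+2}-1)B_{n+k+2}$ for $n\ge0$. *)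

theory Defs
  imports "HOL-Analysis.Analysis" "HOL-Computational_Algebra.Formal_Power_Series"
begin

definition stepsB :: "(int \<times> int) set" where
  "stepsB = {(-1,1), (0,1), (1,0), (1,-1)}"

definition walksB :: "nat \<Rightarrow> nat \<Rightarrow> nat \<Rightarrow> nat" where
  "walksB n i j = card {ps :: (int \<times> int) list.
      length ps = Suc n \<and> ps ! 0 = (0,0) \<and> ps ! n = (int i, int j) \<and>
      (\<forall>p \<in> set ps. fst p \<ge> 0 \<and> snd p \<ge> 0) \<and>
      (\<forall>m < n. ps ! Suc m - ps ! m \<in> stepsB)}"

definition QB_x0_half :: "real fps" where
  "QB_x0_half = Abs_fps (\<lambda>i. \<Sum>n. real (walksB n i 0) / 2 ^ n)"

definition bernoulli :: "nat \<Rightarrow> real" where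
  "bernoulli n = fact n * fps_nth (fps_X / (fps_exp 1 - 1) :: real fps) n"

definition median_genocchi :: "nat \<Rightarrow> real" where
  "median_genocchi n = 2 * (-1) ^ n * (\<Sum>k = 0..n+1. real ((n+1) choose k) *
      (2 ^ (n+k+2) - 1) * bernoulli (n+k+2))"

end

theory Submission
  imports Defs
begin

unbundle no vec_syntax
notation fps_nth (infixl \<open>$\<close> 75)

definition cc :: "nat \<Rightarrow> real" where "cc m = (2^m - 1) * bernoulli m"

definition sc2 :: "real fps \<Rightarrow> real fps" where "sc2 f = Abs_fps (\<lambda>n. 2^n * f $ n)"

lemma sc2_mult: "sc2 (f * g) = sc2 f * sc2 g"
proof (rule fps_ext)
  fix n
  have "sc2 (f * g) $ n = (\<Sum>i=0..n. 2^n * (f $ i * g $ (n-i)))"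
    by (simp add: sc2_def fps_mult_nth sum_distrib_left)
  also have "\<dots> = (\<Sum>i=0..n. (2^i * f $ i) * (2^(n-i) * g $ (n-i)))"
  proof (rule sum.cong)
    fix i assume "i \<in> {0..n}"
    hence "(2::real)^n = 2^i * 2^(n-i)" by (simp flip: power_add)
    thus "2^n * (f $ i * g $ (n-i)) = (2^i * f $ i) * (2^(n-i) * g $ (n-i))" by simp
  qed simp
  also have "\<dots> = (sc2 f * sc2 g) $ n" by (simp add: sc2_def fps_mult_nth)
  finally show "sc2 (f * g) $ n = (sc2 f * sc2 g) $ n" .
qed

lemma sc2_diff: "sc2 (f - g) = sc2 f - sc2 g"
  by (rule fps_ext) (simp add: sc2_def algebra_simps)

lemma sc2_X: "sc2 fps_X = 2 * fps_X"
  by (rule fps_ext) (simp add: sc2_def fps_X_def)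

lemma sc2_one: "sc2 1 = 1"
  by (rule fps_ext) (simp add: sc2_def)

lemma sc2_exp: "sc2 (fps_exp 1) = fps_exp 1 * fps_exp 1"
proof -
  have "sc2 (fps_exp 1) = fps_exp (2::real)"
    by (rule fps_ext) (simp add: sc2_def fps_exp_def)
  also have "\<dots> = fps_exp (1+1)" by simp
  finally show ?thesis by (simp only: fps_exp_add_mult)
qed

lemma cc_rec: "(\<Sum>k\<le>m. real (m choose k) * cc k) + cc m = (if m = 1 then -1 else 0)"
proof -
  define E :: "real fps" where "E = fps_exp 1"
  define b :: "real fps" where "b = fps_X / (E - 1)"
  have E1nz: "E - 1 \<noteq> 0"
  proof
    assume "E - 1 = 0"
    hence "(E - 1) $ 1 = 0" by simp
    thus False by (simp add: E_def)
  qed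
  have sd: "subdegree (E - 1) = 1"
    by (rule subdegreeI) (auto simp: E_def)
  have dv: "(E - 1) dvd fps_X"
    using E1nz by (subst fps_dvd_iff) (auto simp: sd)
  have b1: "b * (E - 1) = fps_X"
    unfolding b_def using dv by simp
  have b2: "sc2 b * (E * E - 1) = 2 * fps_X"
    using arg_cong[OF b1, of sc2] by (simp add: sc2_mult sc2_diff sc2_X sc2_one sc2_exp E_def)
  define C where "C = sc2 b - b"
  have "(C * (E + 1) + fps_X) * (E - 1) = 0"
  proof -
    have "(C * (E + 1) + fps_X) * (E - 1) = sc2 b * (E * E - 1) - b * (E - 1) * (E + 1) + fps_X * (E - 1)"
      by (simp add: C_def algebra_simps)
    also have "\<dots> = 0" using b1 b2 by (simp add: algebra_simps)
    finally show ?thesis .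
  qed
  hence key: "C * (E + 1) = - fps_X" using E1nz by (simp add: add_eq_0_iff2)
  have Cn: "C $ k = cc k / fact k" for k
    by (simp add: C_def sc2_def cc_def bernoulli_def b_def E_def field_simps)
  have "(C * (E + 1)) $ m = (\<Sum>k=0..m. C $ k * (1 / fact (m - k) + (if m - k = 0 then 1 else 0)))"
    by (simp add: fps_mult_nth E_def fps_exp_def)
  also have "\<dots> = (\<Sum>k=0..m. C $ k / fact (m - k)) + C $ m"
  proof -
    have "(\<Sum>k=0..m. C $ k * (1 / fact (m - k) + (if m - k = 0 then 1 else 0)))
        = (\<Sum>k=0..m. C $ k / fact (m - k) + (if k = m then C $ k else 0))"
      by (rule sum.cong) auto
    also have "\<dots> = (\<Sum>k=0..m. C $ k / fact (m - k)) + (\<Sum>k=0..m. (if k = m then C $ k else 0))"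
      by (rule sum.distrib)
    finally show ?thesis by simp
  qed
  finally have e0: "(C * (E + 1)) $ m = (\<Sum>k=0..m. C $ k / fact (m - k)) + C $ m" .
  have "(C * (E + 1)) $ m = (if m = 1 then -1 else 0)"
    unfolding key by (simp add: fps_X_def)
  hence e1: "(\<Sum>k=0..m. C $ k / fact (m - k)) + C $ m = (if m = 1 then -1 else 0)"
    using e0 by simp
  have "(\<Sum>k\<le>m. real (m choose k) * cc k) + cc m = fact m * ((\<Sum>k=0..m. C $ k / fact (m - k)) + C $ m)"
  proof -
    have "(\<Sum>k\<le>m. real (m choose k) * cc k) = (\<Sum>k=0..m. fact m * (C $ k / fact (m - k)))"
    proof (rule sum.cong)
      fix k assume "k \<in> {0..m}"
      hence "k \<le> m" by simp
      hence "real (m choose k) = fact m / (fact k * fact (m - k))"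
        by (simp add: binomial_fact)
      thus "real (m choose k) * cc k = fact m * (C $ k / fact (m - k))"
        by (simp add: Cn field_simps)
    qed auto
    thus ?thesis by (simp add: sum_distrib_left algebra_simps Cn)
  qed
  also have "\<dots> = (if m = 1 then -1 else 0)" using e1 by simp
  finally show ?thesis .
qed

lemma cc0: "cc 0 = 0" using cc_rec[of 0] by simp
lemma cc1: "cc 1 = -1/2" using cc_rec[of 1] cc0 by simp


lemma pcompose_power: "pcompose (p ^ n) q = (pcompose p q) ^ n"
  by (induct n) (simp_all add: pcompose_1 pcompose_mult)

definition ell :: "real poly \<Rightarrow> real" where
  "ell p = (\<Sum>k\<le>degree p. coeff p k * cc k)"

lemma ell_eq: assumes "degree p \<le> N" shows "ell p = (\<Sum>k\<le>N. coeff p k * cc k)"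
  unfolding ell_def
  by (rule sum.mono_neutral_left) (use assms in \<open>auto simp: coeff_eq_0\<close>)

lemma ell_add: "ell (p + q) = ell p + ell q"
proof -
  define N where "N = max (degree p) (degree q)"
  have "degree (p + q) \<le> N" unfolding N_def by (rule degree_add_le) auto
  thus ?thesis
    by (simp add: ell_eq[of _ N] N_def sum.distrib algebra_simps)
qed

lemma ell_smult: "ell (smult a p) = a * ell p"
proof -
  have "degree (smult a p) \<le> degree p" by simp
  thus ?thesis by (simp add: ell_eq[of _ "degree p"] sum_distrib_left algebra_simps)
qed

lemma ell_0 [simp]: "ell 0 = 0" by (simp add: ell_def)

lemma ell_minus: "ell (- p) = - ell p"
  using ell_smult[of "-1" p] by simp

lemma ell_diff: "ell (p - q) = ell p - ell q"
  using ell_add[of p "-q"] by (simp add: ell_minus)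

lemma ell_sum: "ell (\<Sum>i\<in>A. f i) = (\<Sum>i\<in>A. ell (f i))"
  by (induct A rule: infinite_finite_induct) (simp_all add: ell_add)

lemma ell_monom: "ell (monom a k) = a * cc k"
proof -
  have "degree (monom a k) \<le> k" by (simp add: degree_monom_le)
  hence "ell (monom a k) = (\<Sum>j\<le>k. coeff (monom a k) j * cc j)" by (rule ell_eq)
  also have "\<dots> = (\<Sum>j\<le>k. if j = k then a * cc j else 0)"
    by (rule sum.cong) (auto simp: coeff_monom)
  also have "\<dots> = a * cc k" by simp
  finally show ?thesis .
qed

lemma ell_const: "ell [:a:] = 0"
  using ell_monom[of a 0] cc0 by (simp add: monom_0)

lemma lin_pow: "[:1,1:] ^ m = (\<Sum>k\<le>m. monom (real (m choose k)) k)"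
proof (rule poly_eqI)
  fix j
  show "coeff ([:1,1:] ^ m) j = coeff (\<Sum>k\<le>m. monom (real (m choose k)) k) j"
  proof (cases "j \<le> m")
    case True
    thus ?thesis by (simp add: coeff_sum coeff_monom coeff_linear_poly_power)
  next
    case False
    have "degree ([:1,1::real:] ^ m) \<le> m" using degree_power_le[of "[:1,1::real:]" m] by simp
    hence "coeff ([:1,1::real:] ^ m) j = 0" using False by (intro coeff_eq_0) auto
    thus ?thesis using False by (simp add: coeff_sum coeff_monom)
  qed
qed

lemma monom_pcompose: "pcompose (monom 1 m) q = q ^ m"
  by (simp add: monom_altdef pcompose_power pcompose_pCons)

lemma ell_shift_monom: "ell (pcompose (monom 1 m) [:1,1:]) + ell (monom 1 m) + (if m = 1 then 1 else 0) = 0"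
proof -
  have "ell (pcompose (monom 1 m) [:1,1:]) = (\<Sum>k\<le>m. real (m choose k) * cc k)"
    by (simp add: monom_pcompose lin_pow ell_sum ell_monom)
  thus ?thesis using cc_rec[of m] by (simp add: ell_monom)
qed

lemma lin_zero:
  fixes \<phi> :: "real poly \<Rightarrow> real"
  assumes add: "\<And>p q. \<phi> (p + q) = \<phi> p + \<phi> q"
    and sm: "\<And>a p. \<phi> (smult a p) = a * \<phi> p"
    and mon: "\<And>m. \<phi> (monom 1 m) = 0"
  shows "\<phi> p = 0"
proof -
  have z: "\<phi> 0 = 0" using sm[of 0 0] by simp
  have s: "\<phi> (\<Sum>i\<in>A. f i) = (\<Sum>i\<in>A. \<phi> (f i))" for A and f :: "nat \<Rightarrow> real poly"
    by (induct A rule: infinite_finite_induct) (simp_all add: z add)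
  have "\<phi> p = \<phi> (\<Sum>i\<le>degree p. monom (coeff p i) i)" by (simp add: poly_as_sum_of_monoms)
  also have "\<dots> = (\<Sum>i\<le>degree p. \<phi> (smult (coeff p i) (monom 1 i)))" by (simp add: s smult_monom)
  also have "\<dots> = 0" by (simp add: sm mon)
  finally show ?thesis .
qed

lemma ell_shift: "ell (pcompose p [:1,1:]) + ell p = - coeff p 1"
proof -
  define \<phi> where "\<phi> p = ell (pcompose p [:1,1:]) + ell p + coeff p 1" for p
  have "\<phi> p = 0"
  proof (rule lin_zero)
    fix m show "\<phi> (monom 1 m) = 0" using ell_shift_monom[of m] by (simp add: \<phi>_def coeff_monom)
  qed (auto simp: \<phi>_def pcompose_add ell_add pcompose_smult ell_smult algebra_simps)
  thus ?thesis by (simp add: \<phi>_def)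
qed


lemma ell_refl: "ell (pcompose p [:-1,-1:]) = - ell p"
proof -
  define \<phi> where "\<phi> p = ell p + ell (pcompose p [:-1,-1:])" for p
  have add: "\<phi> (p + q) = \<phi> p + \<phi> q" for p q by (simp add: \<phi>_def pcompose_add ell_add)
  have sm: "\<phi> (smult a p) = a * \<phi> p" for a p by (simp add: \<phi>_def pcompose_smult ell_smult algebra_simps)
  have ann: "\<phi> (pcompose p [:1,1:] + p) = 0" for p
  proof -
    define r where "r = pcompose p [:0,-1:]"
    have h1: "pcompose [:1,1::real:] [:-1,-1:] = [:0,-1:]" by (simp add: pcompose_pCons)
    have h2: "pcompose [:0,-1::real:] [:1,1:] = [:-1,-1:]" by (simp add: pcompose_pCons)
    have r1: "pcompose (pcompose p [:1,1:]) [:-1,-1:] = r"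
      unfolding r_def by (simp only: pcompose_assoc[symmetric] h1)
    have r2: "pcompose p [:-1,-1:] = pcompose r [:1,1:]"
      unfolding r_def by (simp only: pcompose_assoc[symmetric] h2)
    have c1: "coeff r 1 = - coeff p 1" by (simp add: r_def coeff_pcompose_linear)
    show ?thesis
      using ell_shift[of p] ell_shift[of r] c1
      by (simp add: \<phi>_def pcompose_add ell_add r1 r2)
  qed
  have mon: "\<phi> (monom 1 m) = 0" for m
  proof (induct m rule: less_induct)
    case (less m)
    have e: "pcompose (monom 1 m) [:1,1:] + monom 1 m
        = smult 2 (monom 1 m) + (\<Sum>k<m. smult (real (m choose k)) (monom 1 k))"
    proof -
      have st: "{..m} = insert m {..<m}" by auto
      have "pcompose (monom 1 m) [:1,1:] = (\<Sum>k<m. monom (real (m choose k)) k) + monom 1 m"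
        by (simp only: monom_pcompose lin_pow st sum.insert finite_lessThan lessThan_iff less_irrefl
             not_False_eq_True binomial_n_n of_nat_1 add.commute simp_thms)
      moreover have "smult 2 (monom 1 m) = monom 1 m + monom (1::real) m"
        by (simp add: smult_monom add_monom)
      ultimately show ?thesis by (simp only: add_ac smult_monom mult.right_neutral)
    qed
    have "\<phi> (\<Sum>k<m. smult (real (m choose k)) (monom 1 k)) = (\<Sum>k<m. real (m choose k) * \<phi> (monom 1 k))"
    proof -
      have z: "\<phi> 0 = 0" using sm[of 0 0] by simp
      have s: "\<phi> (\<Sum>i\<in>A. f i) = (\<Sum>i\<in>A. \<phi> (f i))" for A and f :: "nat \<Rightarrow> real poly"
        by (induct A rule: infinite_finite_induct) (simp_all add: z add)
      show ?thesis by (simp add: s sm)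
    qed
    also have "\<dots> = 0" using less by simp
    finally have "0 = 2 * \<phi> (monom 1 m)" using ann[of "monom 1 m"] by (simp add: e add sm)
    thus ?case by simp
  qed
  have "\<phi> p = 0" by (rule lin_zero[OF add sm mon])
  thus ?thesis by (simp add: \<phi>_def)
qed


definition ww :: "real poly" where "ww = [:0,1,1:]"

lemma ww_refl: "pcompose ww [:-1,-1:] = ww"
  by (simp add: ww_def pcompose_pCons)

lemma ell_ww_pow: "ell (ww ^ k) = 0"
  using ell_refl[of "ww ^ k"] by (simp add: pcompose_power ww_refl)

lemma ell_genocchi: "median_genocchi n = 2 * (-1)^n * ell ([:0,1:] * ww ^ (n+1))"
proof -
  have pw: "[:0,1:] * ww ^ (n+1) = monom 1 (n+2) * [:1,1:] ^ (n+1)"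
  proof -
    have w: "ww = [:0,1:] * [:1,1:]" by (simp add: ww_def)
    have "[:0,1::real:] * ([:0,1:]*[:1,1:])^(Suc n) = [:0,1:]^(Suc (Suc n)) * [:1,1:]^(Suc n)"
      by (simp only: power_mult_distrib power_Suc mult_ac)
    thus ?thesis unfolding w by (simp only: monom_altdef smult_1_left Suc_eq_plus1 add_2_eq_Suc')
  qed
  have dg: "degree (monom (1::real) (n+2) * [:1,1:] ^ (n+1)) \<le> 2*n+3"
  proof -
    have "degree (monom (1::real) (n+2) * [:1,1:] ^ (n+1)) \<le> degree (monom (1::real) (n+2)) + degree ([:1,1::real:] ^ (n+1))"
      by (rule degree_mult_le)
    also have "\<dots> \<le> (n+2) + (n+1)" using degree_power_le[of "[:1,1::real:]" "n+1"]
      by (intro add_mono) (auto simp: degree_monom_le)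
    finally show ?thesis by simp
  qed
  define q where "q = [:1,1::real:] ^ (n+1)"
  have "ell ([:0,1:] * ww ^ (n+1)) = (\<Sum>j\<le>2*n+3. coeff (monom 1 (n+2) * q) j * cc j)"
    unfolding pw q_def by (rule ell_eq[OF dg])
  also have "\<dots> = (\<Sum>j\<le>2*n+3. (if j < n+2 then 0 else coeff q (j - (n+2))) * cc j)"
    by (intro sum.cong refl) (simp only: coeff_monom_mult mult_1)
  also have "\<dots> = (\<Sum>j\<in>{n+2..2*n+3}. coeff q (j - (n+2)) * cc j)"
    by (rule sum.mono_neutral_cong_right) auto
  also have "\<dots> = (\<Sum>k=0..n+1. coeff q k * cc (k + (n+2)))"
  proof -
    have "{n+2..2*n+3} = {0+(n+2)..(n+1)+(n+2)}" by simp
    hence "(\<Sum>j\<in>{n+2..2*n+3}. coeff q (j - (n+2)) * cc j) = (\<Sum>k=0..n+1. coeff q (k + (n+2) - (n+2)) * cc (k + (n+2)))"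
      by (simp only: sum.shift_bounds_cl_nat_ivl)
    thus ?thesis by simp
  qed
  also have "\<dots> = (\<Sum>k=0..n+1. real ((n+1) choose k) * cc (n+k+2))"
  proof (rule sum.cong)
    fix k assume "k \<in> {0..n+1}"
    hence "coeff q k = real ((n+1) choose k)" unfolding q_def
      by (subst coeff_linear_poly_power) auto
    thus "coeff q k * cc (k + (n+2)) = real ((n+1) choose k) * cc (n+k+2)"
      by (simp add: add.commute add.left_commute)
  qed simp
  finally have A: "ell ([:0,1:] * ww ^ (n+1)) = (\<Sum>k=0..n+1. real ((n+1) choose k) * cc (n+k+2))" .
  have B: "(\<Sum>k=0..n+1. real ((n+1) choose k) * (2^(n+k+2) - 1) * bernoulli (n+k+2))
     = (\<Sum>k=0..n+1. real ((n+1) choose k) * cc (n+k+2))"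
    by (simp only: cc_def mult.assoc)
  show ?thesis by (simp only: median_genocchi_def A B)
qed


type_synonym R = "real poly fps"

definition emb :: "real fps \<Rightarrow> R" where "emb g = Abs_fps (\<lambda>n. [:g $ n:])"
definition lhat :: "R \<Rightarrow> real fps" where "lhat F = Abs_fps (\<lambda>n. ell (F $ n))"
definition sig :: "R \<Rightarrow> R" where "sig F = Abs_fps (\<lambda>n. pcompose (F $ n) [:1,1:])"
definition ev0 :: "R \<Rightarrow> real fps" where "ev0 F = Abs_fps (\<lambda>n. poly (F $ n) 0)"
definition dz :: "R \<Rightarrow> real fps" where "dz F = Abs_fps (\<lambda>n. coeff (F $ n) 1)"

lemma const_poly_add: "[:a + b:] = [:a:] + [:b::'a::comm_monoid_add:]"
  by simp

lemma const_poly_sum: "[:(\<Sum>i\<in>A. f i):] = (\<Sum>i\<in>A. [:f i:])"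
proof (induct A rule: infinite_finite_induct)
  case (insert x F)
  show ?case by (simp only: sum.insert[OF insert(1,2)] const_poly_add insert(3))
qed simp_all

lemma emb_mult: "emb (f * g) = emb f * emb g"
  by (rule fps_ext) (simp add: emb_def fps_mult_nth const_poly_sum mult.commute)

lemma emb_zero: "emb 0 = 0"
  by (rule fps_ext) (simp add: emb_def)

lemma emb_add: "emb (f + g) = emb f + emb g"
  by (rule fps_ext) (simp add: emb_def)

lemma emb_diff: "emb (f - g) = emb f - emb g"
  by (rule fps_ext) (simp add: emb_def)

lemma emb_one: "emb 1 = 1"
  by (rule fps_ext) (simp add: emb_def)

lemma emb_X: "emb fps_X = fps_X"
  by (rule fps_ext) (simp add: emb_def fps_X_def)

lemma emb_power: "emb (f ^ n) = emb f ^ n"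
  by (induct n) (simp_all add: emb_one emb_mult)

lemma emb_numeral: "emb (numeral k) = numeral k"
proof -
  have "emb (of_nat m) = of_nat m" for m
    by (induct m) (simp_all add: emb_one emb_add emb_zero)
  from this[of "numeral k"] show ?thesis by simp
qed

lemma lhat_zero: "lhat 0 = 0"
  by (rule fps_ext) (simp add: lhat_def)

lemma lhat_add: "lhat (F + G) = lhat F + lhat G"
  by (rule fps_ext) (simp add: lhat_def ell_add)

lemma lhat_diff: "lhat (F - G) = lhat F - lhat G"
  by (rule fps_ext) (simp add: lhat_def ell_diff)

lemma lhat_sum: "lhat (\<Sum>i\<in>A. F i) = (\<Sum>i\<in>A. lhat (F i))"
  by (induct A rule: infinite_finite_induct) (simp_all add: lhat_add lhat_zero)

lemma lhat_emb_mult: "lhat (emb g * F) = g * lhat F"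
proof (rule fps_ext)
  fix n
  have "lhat (emb g * F) $ n = ell (\<Sum>i=0..n. [:g $ i:] * F $ (n - i))"
    by (simp add: lhat_def emb_def fps_mult_nth)
  also have "\<dots> = (\<Sum>i=0..n. g $ i * ell (F $ (n - i)))"
    by (simp add: ell_sum ell_smult)
  also have "\<dots> = (g * lhat F) $ n" by (simp add: lhat_def fps_mult_nth)
  finally show "lhat (emb g * F) $ n = (g * lhat F) $ n" .
qed

lemma lhat_const: "lhat (fps_const p) = fps_const (ell p)"
  by (rule fps_ext) (simp add: lhat_def)

lemma lhat_Xpow_nth: "j < k \<Longrightarrow> lhat (fps_X ^ k * F) $ j = 0"
  by (simp add: lhat_def fps_X_power_mult_nth)

lemma lhat_shift: "lhat (sig F + F) = - dz F"
  by (rule fps_ext) (simp add: lhat_def sig_def dz_def ell_add ell_shift eq_neg_iff_add_eq_0)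

lemma sig_mult: "sig (F * G) = sig F * sig G"
  by (rule fps_ext) (simp add: sig_def fps_mult_nth pcompose_sum pcompose_mult)

lemma sig_add: "sig (F + G) = sig F + sig G"
  by (rule fps_ext) (simp add: sig_def pcompose_add)

lemma sig_diff: "sig (F - G) = sig F - sig G"
  by (rule fps_ext) (simp add: sig_def pcompose_diff)

lemma sig_const: "sig (fps_const p) = fps_const (pcompose p [:1,1:])"
  by (rule fps_ext) (simp add: sig_def)

lemma sig_emb: "sig (emb g) = emb g"
  by (rule fps_ext) (simp add: sig_def emb_def)

lemma sig_one: "sig 1 = 1"
  by (rule fps_ext) (simp add: sig_def pcompose_1)

lemma sig_X: "sig fps_X = fps_X"
  by (rule fps_ext) (simp add: sig_def fps_X_def pcompose_1)

lemma sig_power: "sig (F ^ n) = sig F ^ n"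
  by (induct n) (simp_all add: sig_one sig_mult)

lemma ev0_mult: "ev0 (F * G) = ev0 F * ev0 G"
  by (rule fps_ext) (simp add: ev0_def fps_mult_nth poly_sum)

lemma ev0_add: "ev0 (F + G) = ev0 F + ev0 G"
  by (rule fps_ext) (simp add: ev0_def)

lemma ev0_diff: "ev0 (F - G) = ev0 F - ev0 G"
  by (rule fps_ext) (simp add: ev0_def)

lemma ev0_one: "ev0 1 = 1"
  by (rule fps_ext) (simp add: ev0_def)

lemma ev0_X: "ev0 fps_X = fps_X"
  by (rule fps_ext) (simp add: ev0_def fps_X_def)

lemma ev0_const: "ev0 (fps_const p) = fps_const (poly p 0)"
  by (rule fps_ext) (simp add: ev0_def)

lemma ev0_power: "ev0 (F ^ n) = ev0 F ^ n"
  by (induct n) (simp_all add: ev0_one ev0_mult)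

lemma dz_T_mult: "dz (fps_const [:0,1:] * G) = ev0 G"
  by (rule fps_ext) (simp add: dz_def ev0_def poly_0_coeff_0)

lemma geo_sum: fixes x :: "'a::comm_ring_1" shows "(1 - x) * (\<Sum>s\<le>N. x ^ s) = 1 - x ^ Suc N"
proof (induct N)
  case (Suc N)
  have "(1 - x) * (\<Sum>s\<le>Suc N. x ^ s) = (1 - x) * (\<Sum>s\<le>N. x ^ s) + (1 - x) * x ^ Suc N"
    by (simp add: distrib_left)
  also have "\<dots> = 1 - x ^ Suc (Suc N)" using Suc by (simp add: algebra_simps)
  finally show ?case .
qed simp


definition iP :: "real fps" where "iP = inverse (1 - fps_X)"
definition iM :: "real fps" where "iM = inverse (1 + fps_X)"
definition rp :: "real fps" where "rp = fps_X^2 * iP"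
definition rm :: "real fps" where "rm = fps_X^2 * iM"

lemma iP: "(1 - fps_X) * iP = 1" unfolding iP_def by (rule inverse_mult_eq_1') simp
lemma iM: "(1 + fps_X) * iM = 1" unfolding iM_def by (rule inverse_mult_eq_1') simp

definition lam :: "nat \<Rightarrow> real" where "lam s = ell ([:1,2:] * ww ^ (s+1))"

definition Phi :: "nat \<Rightarrow> real fps" where
  "Phi N = (\<Sum>s\<le>N. fps_const (lam s) * ((1 + fps_X)^2 * rp^s + (1 - fps_X)^2 * rm^s))"

definition TT :: R where "TT = fps_const [:0,1:]"
definition G0 :: R where "G0 = fps_right_inverse (1 - fps_X^2 * TT^2) 1"

lemma G0: "(1 - fps_X^2 * TT^2) * G0 = 1"
  unfolding G0_def by (rule fps_right_inverse) (simp add: TT_def)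

lemma sig_TT: "sig TT = TT + 1"
  by (simp add: TT_def sig_const pcompose_pCons fps_const_add [symmetric] one_pCons)

lemma G1: "(1 - fps_X^2 * (TT+1)^2) * sig G0 = 1"
proof -
  have "sig ((1 - fps_X^2 * TT^2) * G0) = sig 1" by (simp only: G0)
  thus ?thesis by (simp add: sig_mult sig_diff sig_one sig_power sig_X sig_TT)
qed

lemma ev0_G0: "ev0 G0 = 1"
proof -
  have "ev0 ((1 - fps_X^2 * TT^2) * G0) = 1" by (simp only: G0 ev0_one)
  thus ?thesis by (simp add: ev0_mult ev0_diff ev0_one ev0_power ev0_X TT_def ev0_const)
qed

lemma WcU: "fps_const ww = TT * (1 + TT)" "fps_const [:1,2:] = 2 * TT + 1"
proof -
  have "fps_const [:1,2::real:] = fps_const (2 * [:0,1:] + 1)" by (simp add: one_pCons numeral_poly)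
  thus "fps_const [:1,2:] = 2 * TT + 1"
    by (simp only: TT_def fps_const_add fps_const_mult) (simp add: numeral_fps_const)
  have "fps_const ww = fps_const ([:0,1:] * (1 + [:0,1::real:]))" by (simp add: ww_def one_pCons)
  thus "fps_const ww = TT * (1 + TT)" by (simp only: TT_def fps_const_add fps_const_mult) simp
qed


lemma ell_U: "ell [:1,2:] = -1"
proof -
  have "ell [:1,2:] = (\<Sum>k\<le>1. coeff [:1,2::real:] k * cc k)" by (rule ell_eq) simp
  also have "\<dots> = cc 0 + 2 * cc 1" by simp
  finally show ?thesis using cc0 cc1 by simp
qed

lemma Pprod: fixes c T :: "'a::idom"
  shows "(1 - c - c^2 * (T * (1 + T))) * (1 + c - c^2 * (T * (1 + T)))
       = (1 - c^2 * T^2) * (1 - c^2 * (T + 1)^2)"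
  by algebra

lemma bigpoly: fixes c T :: "'a::idom"
  shows "(1+c)^2 * (1 + c - c^2 * (T * (1 + T))) * (c^2 * (2*T+1) * ((1-c) * (T * (1 + T))))
       + (1-c)^2 * (1 - c - c^2 * (T * (1 + T))) * (c^2 * (2*T+1) * ((1+c) * (T * (1 + T))))
     = 2 * (1-c^2)^2 * (T * (1 - c^2 * (T + 1)^2) + (T + 1) * (1 - c^2 * T^2))
       - 2 * (1-c^2) * (2*T+1) * ((1 - c^2 * T^2) * (1 - c^2 * (T + 1)^2))"
  by algebra


definition cR :: R where "cR = fps_X"
definition Wc :: R where "Wc = fps_const ww"
definition UR :: R where "UR = fps_const [:1,2:]"
definition Rp :: R where "Rp = emb rp"
definition Rm :: R where "Rm = emb rm"
definition Wp :: "nat \<Rightarrow> R" where "Wp N = (\<Sum>s\<le>N. Wc^(s+1) * Rp^s)"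
definition Wm :: "nat \<Rightarrow> R" where "Wm N = (\<Sum>s\<le>N. Wc^(s+1) * Rm^s)"
definition ZR :: "nat \<Rightarrow> R" where "ZR N = cR^2 * UR * ((1+cR)^2 * Wp N + (1-cR)^2 * Wm N)"
definition Pp :: R where "Pp = 1 - cR - cR^2 * Wc"
definition Pm :: R where "Pm = 1 + cR - cR^2 * Wc"

lemma embc: "emb fps_X = cR" by (simp add: cR_def emb_X)

lemma term1: "cR^2 * UR * (1+cR)^2 * (Wc^(s+1) * Rp^s)
      = emb (fps_X^2 * ((1 + fps_X)^2 * rp^s)) * fps_const ([:1,2:] * ww^(s+1))"
  by (simp add: emb_mult emb_power emb_add emb_one embc Rp_def UR_def Wc_def fps_const_mult fps_const_power mult_ac)

lemma term2: "cR^2 * UR * (1-cR)^2 * (Wc^(s+1) * Rm^s)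
      = emb (fps_X^2 * ((1 - fps_X)^2 * rm^s)) * fps_const ([:1,2:] * ww^(s+1))"
  by (simp add: emb_mult emb_power emb_diff emb_one embc Rm_def UR_def Wc_def fps_const_mult fps_const_power mult_ac)

lemma lhatZ: "lhat (ZR N) = fps_X^2 * Phi N"
proof -
  have "ZR N = (\<Sum>s\<le>N. cR^2 * UR * (1+cR)^2 * (Wc^(s+1) * Rp^s) + cR^2 * UR * (1-cR)^2 * (Wc^(s+1) * Rm^s))"
    by (simp only: ZR_def Wp_def Wm_def sum_distrib_left sum.distrib distrib_left mult.assoc)
  also have "\<dots> = (\<Sum>s\<le>N. emb (fps_X^2 * ((1 + fps_X)^2 * rp^s)) * fps_const ([:1,2:] * ww^(s+1))
      + emb (fps_X^2 * ((1 - fps_X)^2 * rm^s)) * fps_const ([:1,2:] * ww^(s+1)))"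
    by (simp only: term1 term2)
  finally have "lhat (ZR N) = (\<Sum>s\<le>N. fps_X^2 * ((1 + fps_X)^2 * rp^s) * fps_const (lam s)
                 + fps_X^2 * ((1 - fps_X)^2 * rm^s) * fps_const (lam s))"
    by (simp only: lhat_sum lhat_add lhat_emb_mult lhat_const lam_def[symmetric])
  thus ?thesis
    by (simp add: Phi_def sum_distrib_left algebra_simps)
qed

lemma cRp: "(1 - cR) * Rp = cR^2"
proof -
  have "(1 - fps_X) * rp = fps_X^2" using iP by (simp add: rp_def mult_ac)
  hence "emb ((1 - fps_X) * rp) = emb (fps_X^2)" by simp
  thus ?thesis by (simp add: emb_mult emb_diff emb_one emb_power embc Rp_def)
qed

lemma cRm: "(1 + cR) * Rm = cR^2"
proof -
  have "(1 + fps_X) * rm = fps_X^2" using iM by (simp add: rm_def mult_ac)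
  hence "emb ((1 + fps_X) * rm) = emb (fps_X^2)" by simp
  thus ?thesis by (simp add: emb_mult emb_add emb_one emb_power embc Rm_def)
qed


lemma f1: "Wp N * Pp = (1-cR) * Wc - (1-cR) * Wc * (Wc * Rp)^(N+1)"
proof -
  have "Wp N = Wc * (\<Sum>s\<le>N. (Wc * Rp)^s)"
    by (simp add: Wp_def sum_distrib_left power_mult_distrib mult_ac)
  moreover have "Pp = (1 - cR) * (1 - Wc * Rp)"
    using cRp unfolding Pp_def by algebra
  ultimately have "Wp N * Pp = (1 - cR) * Wc * ((1 - Wc * Rp) * (\<Sum>s\<le>N. (Wc * Rp)^s))"
    by (simp add: mult_ac)
  also have "\<dots> = (1-cR) * Wc - (1-cR) * Wc * (Wc * Rp)^(N+1)"
    by (simp only: geo_sum Suc_eq_plus1) algebra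
  finally show ?thesis .
qed

lemma f2: "Wm N * Pm = (1+cR) * Wc - (1+cR) * Wc * (Wc * Rm)^(N+1)"
proof -
  have "Wm N = Wc * (\<Sum>s\<le>N. (Wc * Rm)^s)"
    by (simp add: Wm_def sum_distrib_left power_mult_distrib mult_ac)
  moreover have "Pm = (1 + cR) * (1 - Wc * Rm)"
    using cRm unfolding Pm_def by algebra
  ultimately have "Wm N * Pm = (1 + cR) * Wc * ((1 - Wc * Rm) * (\<Sum>s\<le>N. (Wc * Rm)^s))"
    by (simp add: mult_ac)
  also have "\<dots> = (1+cR) * Wc - (1+cR) * Wc * (Wc * Rm)^(N+1)"
    by (simp only: geo_sum Suc_eq_plus1) algebra
  finally show ?thesis .
qed


definition Ep :: "nat \<Rightarrow> R" where "Ep N = cR^2 * UR * ((1-cR) * Wc * (Wc * Rp)^(N+1))"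
definition Em :: "nat \<Rightarrow> R" where "Em N = cR^2 * UR * ((1+cR) * Wc * (Wc * Rm)^(N+1))"
definition Err :: "nat \<Rightarrow> R" where "Err N = (1+cR)^2 * Pm * Ep N + (1-cR)^2 * Pp * Em N"

lemma Zeq1: "ZR N * (Pp * Pm) = (1+cR)^2 * Pm * (cR^2 * UR * (Wp N * Pp)) + (1-cR)^2 * Pp * (cR^2 * UR * (Wm N * Pm))"
  unfolding ZR_def by algebra

lemma Zeq2: "ZR N * (Pp * Pm) = (1+cR)^2 * Pm * (cR^2 * UR * ((1-cR) * Wc)) + (1-cR)^2 * Pp * (cR^2 * UR * ((1+cR) * Wc)) - Err N"
  unfolding Zeq1 f1 f2 Err_def Ep_def Em_def by algebra

lemma Zeq3: "ZR N * (Pp * Pm) = 2 * (1-cR^2)^2 * (TT * (1 - cR^2 * (TT + 1)^2) + (TT + 1) * (1 - cR^2 * TT^2))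
       - 2 * (1-cR^2) * UR * ((1 - cR^2 * TT^2) * (1 - cR^2 * (TT + 1)^2)) - Err N"
  apply (subst Zeq2)
  unfolding Pp_def Pm_def Wc_def UR_def WcU by (simp only: bigpoly)

lemma PP: "Pp * Pm = (1 - cR^2 * TT^2) * (1 - cR^2 * (TT + 1)^2)"
  unfolding Pp_def Pm_def Wc_def WcU by (rule Pprod)


lemma GG: "(Pp * Pm) * (G0 * sig G0) = 1"
proof -
  have "(Pp * Pm) * (G0 * sig G0) = ((1 - cR^2 * TT^2) * G0) * ((1 - cR^2 * (TT + 1)^2) * sig G0)"
    unfolding PP by (simp only: mult_ac)
  also have "\<dots> = 1" using G0 G1 by (simp add: cR_def)
  finally show ?thesis .
qed

lemma gen_cancel: fixes a b g h :: "'a::idom"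
  assumes "a * g = 1" "b * h = 1"
  shows "(K * (T * b + S * a) - L * (a * b) - E) * (g * h) = K * (T * g + S * h) - L - E * (g * h)"
  using assms by algebra

lemma Zfin: "ZR N = 2 * (1-cR^2)^2 * (TT * G0 + (TT + 1) * sig G0) - 2 * (1-cR^2) * UR - Err N * (G0 * sig G0)"
proof -
  have a: "(1 - cR^2 * TT^2) * G0 = 1" using G0 by (simp add: cR_def)
  have b: "(1 - cR^2 * (TT + 1)^2) * sig G0 = 1" using G1 by (simp add: cR_def)
  have "ZR N = ZR N * (Pp * Pm) * (G0 * sig G0)" using GG by (simp add: mult.assoc)
  also have "\<dots> = (2 * (1-cR^2)^2 * (TT * (1 - cR^2 * (TT + 1)^2) + (TT + 1) * (1 - cR^2 * TT^2))
       - (2 * (1-cR^2) * UR) * ((1 - cR^2 * TT^2) * (1 - cR^2 * (TT + 1)^2)) - Err N) * (G0 * sig G0)"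
    by (simp only: Zeq3 mult.assoc)
  also have "\<dots> = 2 * (1-cR^2)^2 * (TT * G0 + (TT + 1) * sig G0) - 2 * (1-cR^2) * UR - Err N * (G0 * sig G0)"
    by (rule gen_cancel[OF a b])
  finally show ?thesis .
qed

definition Hh :: "nat \<Rightarrow> R" where
  "Hh N = (((1+cR)^2 * Pm * (UR * ((1-cR) * Wc * (Wc * emb iP)^(N+1)))
          + (1-cR)^2 * Pp * (UR * ((1+cR) * Wc * (Wc * emb iM)^(N+1))))) * (G0 * sig G0)"

lemma ErrH: "Err N * (G0 * sig G0) = fps_X^(2*N+4) * Hh N"
proof -
  have Rp': "Rp = cR^2 * emb iP" by (simp add: Rp_def rp_def emb_mult emb_power embc)
  have Rm': "Rm = cR^2 * emb iM" by (simp add: Rm_def rm_def emb_mult emb_power embc)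
  define K where "K = (cR^2)^(N+1)"
  have ee: "2*N+4 = 2*(N+1)+2" by simp
  have K: "fps_X^(2*N+4) = K * cR^2"
    unfolding K_def cR_def ee by (simp only: power_mult power_add)
  have q1: "(Wc * Rp)^(N+1) = K * (Wc * emb iP)^(N+1)"
    unfolding Rp' K_def by (simp only: power_mult_distrib mult_ac)
  have q2: "(Wc * Rm)^(N+1) = K * (Wc * emb iM)^(N+1)"
    unfolding Rm' K_def by (simp only: power_mult_distrib mult_ac)
  show ?thesis unfolding K Err_def Ep_def Em_def Hh_def q1 q2 by algebra
qed

lemma main_R:
  "\<exists>e. (\<forall>j<2*N+4. e $ j = 0) \<and> fps_X^2 * Phi N = 2 * fps_X^2 * (1 - fps_X^2) - e"
proof -
  define e where "e = lhat (fps_X^(2*N+4) * Hh N)"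
  have e0: "\<forall>j<2*N+4. e $ j = 0" unfolding e_def by (auto intro: lhat_Xpow_nth)
  have dzS: "dz (TT * G0) = 1" unfolding TT_def by (simp add: dz_T_mult ev0_G0)
  have sS: "sig (TT * G0) = (TT + 1) * sig G0" by (simp add: sig_mult sig_TT)
  have "ZR N = emb (2 * (1 - fps_X^2)^2) * (sig (TT * G0) + TT * G0) - emb (2 * (1 - fps_X^2)) * UR
              - fps_X^(2*N+4) * Hh N"
    unfolding Zfin ErrH sS by (simp add: emb_mult emb_diff emb_power emb_one embc emb_numeral algebra_simps)
  hence "lhat (ZR N) = 2 * (1 - fps_X^2)^2 * lhat (sig (TT * G0) + TT * G0)
       - 2 * (1 - fps_X^2) * lhat UR - e"
    by (simp add: lhat_diff lhat_emb_mult e_def)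
  also have "\<dots> = 2 * fps_X^2 * (1 - fps_X^2) - e"
  proof -
    have l1: "lhat (sig (TT * G0) + TT * G0) = -1" by (simp only: lhat_shift dzS)
    have l2: "lhat UR = -1" by (simp add: UR_def lhat_const ell_U)
    show ?thesis unfolding l1 l2 by (simp add: algebra_simps power2_eq_square)
  qed
  finally show ?thesis using lhatZ e0 by auto
qed


definition Bs :: "nat \<Rightarrow> real fps" where "Bs s = (1 + fps_X)^2 * rp^s + (1 - fps_X)^2 * rm^s"
definition Psi :: "(nat \<Rightarrow> real) \<Rightarrow> nat \<Rightarrow> real fps" where
  "Psi a N = (\<Sum>s\<le>N. fps_const (a s) * Bs s)"

lemma Phi_Psi: "Phi N = Psi lam N" by (simp add: Phi_def Psi_def Bs_def)

lemma Bern_side: "j < 2*N+2 \<Longrightarrow> Psi lam N $ j = (2 * (1 - fps_X^2)) $ j"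
proof -
  assume j: "j < 2*N+2"
  obtain e :: "real fps" where e: "\<forall>j<2*N+4. e $ j = 0" and eq: "fps_X^2 * Phi N = 2 * fps_X^2 * (1 - fps_X^2) - e"
    using main_R by blast
  have "(fps_X^2 * Phi N) $ (j+2) = (2 * fps_X^2 * (1 - fps_X^2) - e) $ (j+2)" by (simp only: eq)
  moreover have "(fps_X^2 * Phi N) $ (j+2) = Phi N $ j" by (simp add: fps_X_power_mult_nth)
  moreover have "(2 * fps_X^2 * (1 - fps_X^2) - e) $ (j+2) = (2 * (1 - fps_X^2)) $ j"
  proof -
    have sh: "(fps_X^2 * F) $ (j+2) = F $ j" for F :: "real fps" by (simp add: fps_X_power_mult_nth)
    have eqA: "(2 * fps_X^2 * (1 - fps_X^2) :: real fps) = fps_X^2 * (2 * (1 - fps_X^2))" by (simp only: mult_ac)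
    have "(2 * fps_X^2 * (1 - fps_X^2) - e) $ (j+2) = (fps_X^2 * (2 * (1 - fps_X^2))) $ (j+2) - e $ (j+2)"
      by (simp only: eqA fps_sub_nth)
    also have "\<dots> = (2 * (1 - fps_X^2)) $ j" using e j by (simp only: sh)
    finally show ?thesis .
  qed
  ultimately show ?thesis by (simp add: Phi_Psi)
qed

lemma Bs_nth: "Bs N $ (2*N) = 2"
proof -
  have r1: "(fps_X^2 * iP)^N = fps_X^(2*N) * iP^N" by (simp only: power_mult_distrib power_mult)
  have r2: "(fps_X^2 * iM)^N = fps_X^(2*N) * iM^N" by (simp only: power_mult_distrib power_mult)
  have "Bs N = fps_X^(2*N) * ((1 + fps_X)^2 * iP^N + (1 - fps_X)^2 * iM^N)"
    unfolding Bs_def rp_def rm_def r1 r2 by (simp only: distrib_left mult_ac)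
  hence "Bs N $ (2*N) = ((1 + fps_X)^2 * iP^N + (1 - fps_X)^2 * iM^N) $ 0"
    by (simp add: fps_X_power_mult_nth)
  also have "\<dots> = 2" by (simp add: iP_def iM_def fps_nth_power_0)
  finally show ?thesis .
qed

lemma Bs_low: assumes j: "j < 2*k" shows "Bs k $ j = 0"
proof -
  have r1: "(fps_X^2 * iP)^k = fps_X^(2*k) * iP^k" by (simp only: power_mult_distrib power_mult)
  have r2: "(fps_X^2 * iM)^k = fps_X^(2*k) * iM^k" by (simp only: power_mult_distrib power_mult)
  have "Bs k = fps_X^(2*k) * ((1 + fps_X)^2 * iP^k + (1 - fps_X)^2 * iM^k)"
    unfolding Bs_def rp_def rm_def r1 r2 by (simp only: distrib_left mult_ac)
  thus ?thesis using j by (simp add: fps_X_power_mult_nth)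
qed

lemma uniq:
  assumes A: "\<And>N j. j < 2*N+2 \<Longrightarrow> Psi a N $ j = (2 * (1 - fps_X^2)) $ j"
      and B: "\<And>N j. j < 2*N+2 \<Longrightarrow> Psi b N $ j = (2 * (1 - fps_X^2)) $ j"
  shows "a N = b N"
proof (induct N rule: less_induct)
  case (less N)
  have "(Psi a N - Psi b N) $ (2*N) = 0" using A[of "2*N" N] B[of "2*N" N] by simp
  moreover have "Psi a N - Psi b N = (\<Sum>s\<le>N. fps_const (a s - b s) * Bs s)"
    by (simp add: Psi_def sum_subtractf algebra_simps flip: fps_const_sub)
  moreover have "(\<Sum>s\<le>N. fps_const (a s - b s) * Bs s) = fps_const (a N - b N) * Bs N"
  proof -
    have "(\<Sum>s\<le>N. fps_const (a s - b s) * Bs s) = (\<Sum>s\<in>{N}. fps_const (a s - b s) * Bs s)"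
      by (rule sum.mono_neutral_right) (use less in auto)
    thus ?thesis by simp
  qed
  ultimately have "(a N - b N) * 2 = 0" by (simp add: Bs_nth)
  thus ?case by simp
qed


definition inN :: "int \<times> int \<Rightarrow> bool" where "inN p \<longleftrightarrow> fst p \<ge> 0 \<and> snd p \<ge> 0"

definition Wset :: "nat \<Rightarrow> int \<times> int \<Rightarrow> (int \<times> int) list set" where
  "Wset n p = {ps. length ps = Suc n \<and> ps ! 0 = (0,0) \<and> ps ! n = p \<and>
      (\<forall>q \<in> set ps. fst q \<ge> 0 \<and> snd q \<ge> 0) \<and>
      (\<forall>m < n. ps ! Suc m - ps ! m \<in> stepsB)}"

definition wal :: "nat \<Rightarrow> int \<times> int \<Rightarrow> nat" where "wal n p = card (Wset n p)"

lemma walksB_wal: "walksB n i j = wal n (int i, int j)"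
  by (simp add: walksB_def wal_def Wset_def)

lemma Wset0: "Wset 0 p = (if p = (0,0) then {[(0,0)]} else {})"
proof -
  have "ps \<in> Wset 0 p \<longleftrightarrow> p = (0,0) \<and> ps = [(0,0)]" for ps
  proof
    assume "ps \<in> Wset 0 p"
    hence "length ps = 1" "ps ! 0 = (0,0)" "ps ! 0 = p" by (auto simp: Wset_def)
    thus "p = (0,0) \<and> ps = [(0,0)]" by (cases ps) auto
  qed (auto simp: Wset_def)
  thus ?thesis by auto
qed

lemma WsetSuc: "Wset (Suc n) p = (if inN p then (\<Union>b\<in>stepsB. (\<lambda>qs. qs @ [p]) ` Wset n (p - b)) else {})"
proof -
  have sub1: "ps \<in> (\<Union>b\<in>stepsB. (\<lambda>qs. qs @ [p]) ` Wset n (p - b))" if ps: "ps \<in> Wset (Suc n) p" for ps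
  proof -
    from ps have len: "length ps = Suc (Suc n)" and p0: "ps ! 0 = (0,0)" and pn: "ps ! Suc n = p"
      and nn: "\<forall>q \<in> set ps. fst q \<ge> 0 \<and> snd q \<ge> 0" and st: "\<forall>m < Suc n. ps ! Suc m - ps ! m \<in> stepsB"
      by (auto simp: Wset_def)
    define qs where "qs = butlast ps"
    have ne: "ps \<noteq> []" using len by auto
    have lastp: "last ps = p" using pn len ne by (simp add: last_conv_nth)
    have psq: "ps = qs @ [p]" unfolding qs_def using ne lastp by (metis append_butlast_last_id)
    have lq: "length qs = Suc n" using len by (simp add: qs_def)
    have qi: "qs ! i = ps ! i" if "i < Suc n" for i
      using that len unfolding qs_def by (simp add: nth_butlast)
    define b where "b = p - ps ! n"
    have b: "b \<in> stepsB" using st[rule_format, of n] pn by (simp add: b_def)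
    have "qs \<in> Wset n (p - b)"
      unfolding Wset_def
    proof (intro CollectI conjI)
      show "length qs = Suc n" by (rule lq)
      show "qs ! 0 = (0,0)" using qi[of 0] p0 by simp
      show "qs ! n = p - b" using qi[of n] by (simp add: b_def)
      show "\<forall>q\<in>set qs. fst q \<ge> 0 \<and> snd q \<ge> 0" using nn by (auto simp: qs_def dest: in_set_butlastD)
      show "\<forall>m<n. qs ! Suc m - qs ! m \<in> stepsB" using st qi by auto
    qed
    thus ?thesis using b psq by blast
  qed
  have sub2: "qs @ [p] \<in> Wset (Suc n) p" if b: "b \<in> stepsB" and qs: "qs \<in> Wset n (p - b)" and p: "inN p" for b qs
  proof -
    from qs have lq: "length qs = Suc n" and q0: "qs ! 0 = (0,0)" and qn: "qs ! n = p - b"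
      and nn: "\<forall>q \<in> set qs. fst q \<ge> 0 \<and> snd q \<ge> 0" and st: "\<forall>m < n. qs ! Suc m - qs ! m \<in> stepsB"
      by (auto simp: Wset_def)
    show ?thesis
      unfolding Wset_def
    proof (intro CollectI conjI)
      show "length (qs @ [p]) = Suc (Suc n)" using lq by simp
      show "(qs @ [p]) ! 0 = (0,0)" using lq q0 by (simp add: nth_append)
      show "(qs @ [p]) ! Suc n = p" using lq by (simp add: nth_append)
      show "\<forall>q\<in>set (qs @ [p]). fst q \<ge> 0 \<and> snd q \<ge> 0" using nn p by (auto simp: inN_def)
      show "\<forall>m<Suc n. (qs @ [p]) ! Suc m - (qs @ [p]) ! m \<in> stepsB"
      proof (intro allI impI)
        fix m assume m: "m < Suc n"
        show "(qs @ [p]) ! Suc m - (qs @ [p]) ! m \<in> stepsB"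
        proof (cases "m < n")
          case True thus ?thesis using st lq by (simp add: nth_append)
        next
          case False hence "m = n" using m by simp
          thus ?thesis using lq qn b by (simp add: nth_append)
        qed
      qed
    qed
  qed
  have inN: "inN p" if nem: "Wset (Suc n) p \<noteq> {}"
  proof -
    obtain ps where ps: "ps \<in> Wset (Suc n) p" using nem by blast
    hence "ps ! Suc n \<in> set ps" "ps ! Suc n = p" by (auto simp: Wset_def)
    thus ?thesis using ps by (auto simp: Wset_def inN_def)
  qed
  show ?thesis
  proof (cases "inN p")
    case True
    thus ?thesis using sub1 sub2[OF _ _ True] by (auto simp del: append_Cons)
  next
    case False thus ?thesis using inN by auto
  qed
qed

lemma finite_Wset: "finite (Wset n p)"
proof (induct n arbitrary: p)
  case 0 thus ?case by (simp add: Wset0)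
next
  case (Suc n) thus ?case by (simp add: WsetSuc stepsB_def)
qed

lemma sum_stepsB: "(\<Sum>b\<in>stepsB. f b) = f (-1,1) + f (0,1) + f (1,0) + f (1,-1)"
  by (simp add: stepsB_def add.assoc)

lemma wal0: "wal 0 p = (if p = (0,0) then 1 else 0)"
  by (simp add: wal_def Wset0)

lemma walSuc: "wal (Suc n) p = (if inN p then (\<Sum>b\<in>stepsB. wal n (p - b)) else 0)"
proof (cases "inN p")
  case True
  have "wal (Suc n) p = card (\<Union>b\<in>stepsB. (\<lambda>qs. qs @ [p]) ` Wset n (p - b))"
    by (simp add: wal_def WsetSuc True)
  also have "\<dots> = (\<Sum>b\<in>stepsB. card ((\<lambda>qs. qs @ [p]) ` Wset n (p - b)))"
  proof (rule card_UN_disjoint)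
    show "finite stepsB" by (simp add: stepsB_def)
    show "\<forall>b\<in>stepsB. finite ((\<lambda>qs. qs @ [p]) ` Wset n (p - b))" by (simp add: finite_Wset)
    show "\<forall>b\<in>stepsB. \<forall>b'\<in>stepsB. b \<noteq> b' \<longrightarrow>
        (\<lambda>qs. qs @ [p]) ` Wset n (p - b) \<inter> (\<lambda>qs. qs @ [p]) ` Wset n (p - b') = {}"
    proof (intro ballI impI)
      fix b b' :: "int \<times> int" assume bb: "b \<noteq> b'"
      show "(\<lambda>qs. qs @ [p]) ` Wset n (p - b) \<inter> (\<lambda>qs. qs @ [p]) ` Wset n (p - b') = {}"
      proof (rule ccontr)
        assume "\<not> ?thesis"
        then obtain q1 q2 where q1: "q1 \<in> Wset n (p - b)" and q2: "q2 \<in> Wset n (p - b')" and e: "q1 @ [p] = q2 @ [p]"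
          by blast
        from e have "q1 = q2" by simp
        hence "p - b = p - b'" using q1 q2 by (auto simp: Wset_def)
        thus False using bb by simp
      qed
    qed
  qed
  also have "\<dots> = (\<Sum>b\<in>stepsB. wal n (p - b))"
    by (rule sum.cong) (auto simp: wal_def card_image inj_on_def)
  finally show ?thesis using True by simp
next
  case False thus ?thesis by (simp add: wal_def WsetSuc)
qed

lemma wal_out: "\<not> inN p \<Longrightarrow> wal n p = 0"
  by (cases n) (auto simp: wal0 walSuc inN_def)

lemma wal_sym: "wal n (x, y) = wal n (y, x)"
proof (induct n arbitrary: x y)
  case 0 thus ?case by (auto simp: wal0)
next
  case (Suc n)
  have i: "inN (x,y) = inN (y,x)" by (auto simp: inN_def)
  show ?case
    using Suc[of "y+1" "x-1"] Suc[of y "x-1"] Suc[of "y-1" x] Suc[of "y-1" "x+1"]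
    by (simp add: walSuc i sum_stepsB)
qed


definition psum :: "nat \<Rightarrow> int \<times> int \<Rightarrow> real" where
  "psum N p = (\<Sum>n<N. real (wal n p) / 2^n)"

definition Ubd :: "int \<times> int \<Rightarrow> real" where
  "Ubd p = (if inN p then (fact (nat (fst p + snd p) + 1))^2 * real_of_int (fst p + 1) * real_of_int (snd p + 1) else 0)"

lemma Ubd_nonneg: "Ubd p \<ge> 0"
  by (auto simp: Ubd_def inN_def)

lemma psum_rec: assumes "inN p"
  shows "psum (Suc N) p = (if p = (0,0) then 1 else 0) + (1/2) * (\<Sum>b\<in>stepsB. psum N (p - b))"
proof -
  have "psum (Suc N) p = real (wal 0 p) + (\<Sum>n<N. real (wal (Suc n) p) / 2^(Suc n))"
    unfolding psum_def by (subst sum.lessThan_Suc_shift) simp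
  also have "(\<Sum>n<N. real (wal (Suc n) p) / 2^(Suc n)) = (\<Sum>n<N. \<Sum>b\<in>stepsB. (1/2) * (real (wal n (p - b)) / 2^n))"
    by (rule sum.cong) (simp_all add: walSuc assms sum_divide_distrib)
  also have "\<dots> = (1/2) * (\<Sum>b\<in>stepsB. psum N (p - b))"
    by (simp add: psum_def sum_distrib_left sum.swap[of _ stepsB])
  finally show ?thesis by (simp add: wal0)
qed

lemma psum_out: "\<not> inN p \<Longrightarrow> psum N p = 0"
  by (simp add: psum_def wal_out)

lemma super: assumes p: "inN p"
  shows "(if p = (0,0) then 1 else 0) + (1/2) * (\<Sum>b\<in>stepsB. Ubd (p - b)) \<le> Ubd p"
proof -
  obtain x y where xy: "p = (x,y)" by (cases p)
  have x: "x \<ge> 0" and y: "y \<ge> 0" using p xy by (auto simp: inN_def)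
  define s where "s = nat (x + y)"
  have s: "real s = real_of_int x + real_of_int y" using x y by (simp add: s_def)
  define F where "F = (fact (s + 1) :: real)^2"
  define F' where "F' = (fact s :: real)^2"
  have fs: "(fact (s+1) :: real) = (real s + 1) * fact s" by (simp add: algebra_simps)
  have FF: "F = (real s + 1)^2 * F'" by (simp only: F_def F'_def fs power_mult_distrib)
  have F'0: "F' \<ge> 0" by (simp add: F'_def)
  have u1: "Ubd (x + 1, y - 1) = F * (x + 2) * y"
    using x y by (auto simp: Ubd_def inN_def F_def s_def)
  have u2: "Ubd (x - 1, y + 1) = F * x * (y + 2)"
    using x y by (auto simp: Ubd_def inN_def F_def s_def)
  have u3: "Ubd (x, y - 1) = F' * (x + 1) * y"
  proof (cases "y = 0")
    case True thus ?thesis by (simp add: Ubd_def inN_def)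
  next
    case False
    hence "nat (x + (y - 1)) + 1 = s" using x y by (simp add: s_def)
    thus ?thesis using x y False by (simp add: Ubd_def inN_def F'_def)
  qed
  have u4: "Ubd (x - 1, y) = F' * x * (y + 1)"
  proof (cases "x = 0")
    case True thus ?thesis by (simp add: Ubd_def inN_def)
  next
    case False
    hence "nat (x - 1 + y) + 1 = s" using x y by (simp add: s_def)
    thus ?thesis using x y False by (simp add: Ubd_def inN_def F'_def)
  qed
  have up: "Ubd p = F * (x + 1) * (y + 1)" using x y xy by (simp add: Ubd_def inN_def F_def s_def)
  have sumeq: "(\<Sum>b\<in>stepsB. Ubd (p - b)) = F * (x + 2) * y + F' * (x + 1) * y + F' * x * (y + 1) + F * x * (y + 2)"
  proof -
    have "(\<Sum>b\<in>stepsB. Ubd (p - b)) = Ubd (x+1, y-1) + Ubd (x, y-1) + Ubd (x-1, y) + Ubd (x-1, y+1)"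
      by (simp add: sum_stepsB xy)
    also have "\<dots> = F * (x + 2) * y + F' * (x + 1) * y + F' * x * (y + 1) + F * x * (y + 2)"
      by (simp only: u1 u2 u3 u4)
    finally show ?thesis .
  qed
  have key: "(if p = (0,0) then 1 else 0) + (1/2) * (F' * (x + 1) * y + F' * x * (y + 1)) \<le> F"
  proof (cases "p = (0,0)")
    case True
    hence "x = 0" "y = 0" using xy by auto
    thus ?thesis by (simp add: F_def s_def)
  next
    case False
    have a: "real_of_int (x + 1) * y \<le> (real s + 1)^2"
    proof -
      have "real_of_int (x + 1) * y \<le> (real s + 1) * (real s + 1)"
        by (rule mult_mono) (use x y s in auto)
      thus ?thesis by (simp add: power2_eq_square)
    qed
    have b: "real_of_int x * (y + 1) \<le> (real s + 1)^2"
    proof -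
      have "real_of_int x * (y + 1) \<le> (real s + 1) * (real s + 1)"
        by (rule mult_mono) (use x y s in auto)
      thus ?thesis by (simp add: power2_eq_square)
    qed
    have "F' * (x + 1) * y + F' * x * (y + 1) \<le> F' * (real s + 1)^2 + F' * (real s + 1)^2"
      using mult_left_mono[OF a F'0] mult_left_mono[OF b F'0] by (simp add: mult.assoc)
    thus ?thesis using False FF by (simp add: algebra_simps)
  qed
  show ?thesis unfolding sumeq up using key by (simp add: algebra_simps)
qed

lemma psum_bound: "psum N p \<le> Ubd p"
proof (induct N arbitrary: p)
  case 0 thus ?case by (simp add: psum_def Ubd_nonneg)
next
  case (Suc N)
  show ?case
  proof (cases "inN p")
    case True
    have "psum (Suc N) p = (if p = (0,0) then 1 else 0) + (1/2) * (\<Sum>b\<in>stepsB. psum N (p - b))"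
      by (rule psum_rec[OF True])
    also have "\<dots> \<le> (if p = (0,0) then 1 else 0) + (1/2) * (\<Sum>b\<in>stepsB. Ubd (p - b))"
      using Suc by (intro add_left_mono mult_left_mono sum_mono) auto
    also have "\<dots> \<le> Ubd p" by (rule super[OF True])
    finally show ?thesis .
  next
    case False thus ?thesis by (simp add: psum_out Ubd_nonneg)
  qed
qed

lemma summable_wal: "summable (\<lambda>n. real (wal n p) / 2^n)"
  by (rule summableI_nonneg_bounded[where x="Ubd p"]) (use psum_bound in \<open>auto simp: psum_def\<close>)

definition Fv :: "int \<times> int \<Rightarrow> real" where "Fv p = (\<Sum>n. real (wal n p) / 2^n)"

lemma psum_lim: "(\<lambda>N. psum N p) \<longlonglongrightarrow> Fv p"
  unfolding psum_def Fv_def by (rule summable_LIMSEQ[OF summable_wal])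

lemma Fv_sys: assumes "inN p"
  shows "Fv p = (if p = (0,0) then 1 else 0) + (1/2) * (\<Sum>b\<in>stepsB. Fv (p - b))"
proof -
  have l1: "(\<lambda>N. psum (Suc N) p) \<longlonglongrightarrow> Fv p" using psum_lim by (rule LIMSEQ_Suc)
  have l2: "(\<lambda>N. (if p = (0,0) then 1 else 0) + (1/2) * (\<Sum>b\<in>stepsB. psum N (p - b)))
      \<longlonglongrightarrow> (if p = (0,0) then 1 else 0) + (1/2) * (\<Sum>b\<in>stepsB. Fv (p - b))"
    by (intro tendsto_intros psum_lim)
  show ?thesis using l1 l2 by (simp add: psum_rec[OF assms] LIMSEQ_unique)
qed

lemma Fv_out: "\<not> inN p \<Longrightarrow> Fv p = 0"
  by (simp add: Fv_def wal_out)

lemma Fv_sym: "Fv (x, y) = Fv (y, x)"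
  by (simp add: Fv_def wal_sym)


definition gl :: "nat \<Rightarrow> int \<Rightarrow> real" where "gl s x = Fv (x, int s - x)"
definition fz :: "nat \<Rightarrow> real fps \<Rightarrow> real fps" where "fz s z = (\<Sum>x\<le>s. fps_const (gl s (int x)) * z^x)"
definition Aseq :: "nat \<Rightarrow> real" where "Aseq s = Fv (0, int s)"

lemma gl_out1: "x < 0 \<Longrightarrow> gl s x = 0" by (simp add: gl_def Fv_out inN_def)
lemma gl_out2: "x > int s \<Longrightarrow> gl s x = 0" by (simp add: gl_def Fv_out inN_def)
lemma gl_0: "gl s 0 = Aseq s" by (simp add: gl_def Aseq_def)
lemma gl_s: "gl s (int s) = Aseq s" by (simp add: gl_def Aseq_def Fv_sym)

lemma Fv00: "Fv (0,0) = 1"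
  using Fv_sys[of "(0,0)"] by (simp add: inN_def sum_stepsB Fv_out)

lemma level: assumes "0 \<le> x" "x \<le> int (Suc s)"
  shows "2 * gl (Suc s) x = gl (Suc s) (x+1) + gl (Suc s) (x-1) + gl s x + gl s (x-1)"
proof -
  define S where "S = int (Suc s)"
  have p: "inN (x, S - x)" using assms by (simp add: inN_def S_def)
  have nz: "(x, S - x) \<noteq> (0,0)" using assms by (auto simp: S_def)
  have "Fv (x, S - x) = (1/2) * (Fv (x+1, S - (x+1)) + Fv (x, int s - x) + Fv (x-1, int s - (x-1)) + Fv (x-1, S - (x-1)))"
  proof -
    have e1: "(x, S - x) - (-1, 1) = (x+1, S - (x+1))" by simp
    have e2: "(x, S - x) - (0, 1) = (x, int s - x)" by (simp add: S_def)
    have e3: "(x, S - x) - (1, 0) = (x-1, int s - (x-1))" by (simp add: S_def)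
    have e4: "(x, S - x) - (1, -1) = (x-1, S - (x-1))" by simp
    show ?thesis using Fv_sys[OF p] nz by (simp only: sum_stepsB e1 e2 e3 e4) simp
  qed
  thus ?thesis by (simp add: gl_def S_def algebra_simps)
qed

lemma fz0: "fz 0 z = 1" by (simp add: fz_def gl_def Fv00)

lemma rec0: "(1 - z)^2 * fz 0 z = fps_const (Aseq 0) * (1 + z^2) - 2 * z"
  by (simp add: fz0 Aseq_def Fv00 power2_eq_square algebra_simps)

lemma alg1: fixes z f f' A w :: "'a::idom"
  assumes "2*z*f' = f' - A + z^2*(f' - A*w) + z*f + z^2*f"
  shows "(1-z)^2 * f' = A*(1 + z^2*w) - z*(1+z)*f"
  using assms by algebra

lemma recS: "(1 - z)^2 * fz (Suc s) z = fps_const (Aseq (Suc s)) * (1 + z^(s+3)) - z * (1 + z) * fz s z"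
proof -
  define G where "G x = fps_const (gl (Suc s) x)" for x
  define H where "H x = fps_const (gl s x)" for x
  define f' where "f' = fz (Suc s) z"
  define f where "f = fz s z"
  define A where "A = fps_const (Aseq (Suc s))"
  have f'd: "f' = (\<Sum>x\<le>Suc s. G (int x) * z^x)" by (simp add: f'_def fz_def G_def)
  have fd: "f = (\<Sum>x\<le>s. H (int x) * z^x)" by (simp add: f_def fz_def H_def)
  have G0: "G 0 = A" by (simp add: G_def A_def gl_0)
  have GS: "G (int (Suc s)) = A" by (simp add: G_def A_def gl_s del: of_nat_Suc)
  have Gout: "G (int (Suc s) + 1) = 0" "G (-1) = 0" by (simp_all add: G_def gl_out1 gl_out2)
  have Hout: "H (int (Suc s)) = 0" "H (-1) = 0" by (simp_all add: H_def gl_out1 gl_out2)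
  have T1: "(\<Sum>x\<le>Suc s. G (int x + 1) * z^(x+1)) = f' - A"
  proof -
    have "f' + G (int (Suc s) + 1) * z^(Suc (Suc s)) = (\<Sum>x\<le>Suc (Suc s). G (int x) * z^x)"
      by (simp add: f'd)
    also have "\<dots> = G 0 + (\<Sum>x\<le>Suc s. G (int (Suc x)) * z^(Suc x))"
      by (subst sum.atMost_Suc_shift) simp
    finally show ?thesis using Gout G0 by (simp add: ac_simps)
  qed
  have T2: "(\<Sum>x\<le>Suc s. G (int x - 1) * z^(x+1)) = z^2 * (f' - A * z^(Suc s))"
  proof -
    have "(\<Sum>x\<le>Suc s. G (int x - 1) * z^(x+1)) = G (-1) * z + (\<Sum>x\<le>s. G (int x) * z^(x+2))"
      by (subst sum.atMost_Suc_shift) (simp add: algebra_simps)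
    also have "\<dots> = z^2 * (\<Sum>x\<le>s. G (int x) * z^x)"
      using Gout by (simp add: sum_distrib_left power_add power2_eq_square mult_ac)
    also have "(\<Sum>x\<le>s. G (int x) * z^x) = f' - A * z^(Suc s)"
      using GS by (simp add: f'd del: of_nat_Suc)
    finally show ?thesis .
  qed
  have T3: "(\<Sum>x\<le>Suc s. H (int x) * z^(x+1)) = z * f"
  proof -
    have "(\<Sum>x\<le>Suc s. H (int x) * z^(x+1)) = (\<Sum>x\<le>s. H (int x) * z^(x+1)) + H (int (Suc s)) * z^(Suc s + 1)"
      by (simp only: sum.atMost_Suc)
    thus ?thesis using Hout by (simp add: fd sum_distrib_left mult_ac del: of_nat_Suc)
  qed
  have T4: "(\<Sum>x\<le>Suc s. H (int x - 1) * z^(x+1)) = z^2 * f"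
  proof -
    have "(\<Sum>x\<le>Suc s. H (int x - 1) * z^(x+1)) = H (-1) * z + (\<Sum>x\<le>s. H (int x) * z^(x+2))"
      by (subst sum.atMost_Suc_shift) (simp add: algebra_simps)
    thus ?thesis using Hout by (simp add: fd sum_distrib_left power_add power2_eq_square mult_ac)
  qed
  have lv: "2 * G (int x) = G (int x + 1) + G (int x - 1) + H (int x) + H (int x - 1)" if "x \<le> Suc s" for x
    using level[of "int x" s] that by (simp add: G_def H_def algebra_simps)
  have "2 * z * f' = (\<Sum>x\<le>Suc s. (2 * G (int x)) * z^(x+1))"
    unfolding f'd sum_distrib_left by (intro sum.cong refl) (simp add: mult_ac)
  also have "\<dots> = (\<Sum>x\<le>Suc s. G (int x + 1) * z^(x+1) + G (int x - 1) * z^(x+1) + H (int x) * z^(x+1) + H (int x - 1) * z^(x+1))"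
    by (rule sum.cong) (simp_all add: lv distrib_right)
  also have "\<dots> = (f' - A) + z^2 * (f' - A * z^(Suc s)) + z * f + z^2 * f"
    by (simp only: sum.distrib T1 T2 T3 T4)
  finally have E: "2 * z * f' = (f' - A) + z^2 * (f' - A * z^(Suc s)) + z * f + z^2 * f" .
  have zz: "z^(s+3) = z^2 * z^(Suc s)"
  proof -
    have "s + 3 = 2 + Suc s" by simp
    thus ?thesis by (simp only: power_add)
  qed
  show ?thesis unfolding f'_def[symmetric] f_def[symmetric] A_def[symmetric] zz
    using E by (rule alg1)
qed


lemma alg2: fixes y z Y W a' fN f' :: "'a::idom"
  assumes yz: "y * (z*(1+z)) = - ((1-z)^2)"
    and r: "(1-z)^2 * f' = a' * (1 + W) - z*(1+z)*fN"
  shows "2*z - Y*(z*(1+z))*fN + a' * Y * (1+W) = 2*z - (y*Y)*(z*(1+z))*f'"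
  using assms by algebra

lemma alg3: fixes y z a f :: "'a::idom"
  assumes yz: "y * (z*(1+z)) = - ((1-z)^2)"
    and r: "(1-z)^2 * f = a * (1 + z^2) - 2*z"
  shows "a * 1 * (1 + z^2) = 2*z - y * (z*(1+z)) * f"
  using assms by algebra

lemma tele: fixes y z :: "'a::idom" and f a :: "nat \<Rightarrow> 'a"
  assumes yz: "y * (z*(1+z)) = - ((1-z)^2)"
    and r0: "(1-z)^2 * f 0 = a 0 * (1 + z^2) - 2*z"
    and rS: "\<And>s. (1-z)^2 * f (Suc s) = a (Suc s) * (1 + z^(s+3)) - z*(1+z)*f s"
  shows "(\<Sum>s\<le>N. a s * y^s * (1 + z^(s+2))) = 2*z - y^(N+1) * (z*(1+z)) * f N"
proof (induct N)
  case 0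
  have "(\<Sum>s\<le>0. a s * y^s * (1 + z^(s+2))) = a 0 * 1 * (1 + z^2)" by (simp add: power2_eq_square)
  also have "\<dots> = 2*z - y * (z*(1+z)) * f 0" by (rule alg3[OF yz r0])
  finally show ?case by simp
next
  case (Suc N)
  have e: "Suc N + 2 = N + 3" by simp
  have "(\<Sum>s\<le>Suc N. a s * y^s * (1 + z^(s+2))) = 2*z - y^(N+1) * (z*(1+z)) * f N + a (Suc N) * y^(N+1) * (1 + z^(N+3))"
    using Suc.hyps by (simp add: sum.atMost_Suc eval_nat_numeral)
  also have "\<dots> = 2*z - (y * y^(N+1)) * (z*(1+z)) * f (Suc N)"
    by (rule alg2[OF yz rS])
  finally show ?case by simp
qed

definition zc :: "real fps" where "zc = (1 - fps_X) * iM"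
definition yc :: "real fps" where "yc = -2 * rp"

lemma yz: "yc * (zc * (1 + zc)) = - ((1 - zc)^2)"
  using iP iM unfolding yc_def zc_def rp_def by algebra

lemma zX: "(1 + fps_X) * zc = 1 - fps_X"
  using iM unfolding zc_def by algebra

lemma zrp: "zc * rp = rm"
  using iP unfolding zc_def rp_def rm_def by algebra

lemma term_eq: "(1 + fps_X)^2 * (fps_const a * yc^s * (1 + zc^(s+2))) = fps_const (a * (-2)^s) * Bs s"
proof -
  have m2: "(-2 :: real fps) = fps_const (-2)" by (simp add: numeral_fps_const)
  have y: "yc^s = fps_const ((-2)^s) * rp^s"
    unfolding yc_def power_mult_distrib m2 by (simp only: fps_const_power)
  have "(1 + fps_X)^2 * rp^s * zc^(s+2) = ((1 + fps_X) * zc)^2 * (zc * rp)^s"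
    by (simp add: power_mult_distrib power_add power2_eq_square mult_ac)
  also have "\<dots> = (1 - fps_X)^2 * rm^s" by (simp only: zX zrp)
  finally have k: "(1 + fps_X)^2 * rp^s * zc^(s+2) = (1 - fps_X)^2 * rm^s" .
  have "(1 + fps_X)^2 * (fps_const a * yc^s * (1 + zc^(s+2)))
      = fps_const (a * (-2)^s) * ((1 + fps_X)^2 * rp^s + (1 + fps_X)^2 * rp^s * zc^(s+2))"
  proof -
    have c: "fps_const (a * (-2)^s) = fps_const a * fps_const ((-2)^s)" by simp
    show ?thesis unfolding c y by (simp add: algebra_simps del: fps_const_mult)
  qed
  also have "\<dots> = fps_const (a * (-2)^s) * Bs s" by (simp only: k Bs_def)
  finally show ?thesis .
qed

lemma tri_T: "(\<Sum>s\<le>N. fps_const (Aseq s) * yc^s * (1 + zc^(s+2))) = 2*zc - yc^(N+1) * (zc*(1+zc)) * fz N zc"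
  by (rule tele[where f="\<lambda>s. fz s zc" and a="\<lambda>s. fps_const (Aseq s)", OF yz rec0 recS])

lemma tri_a: "(1 + fps_X)^2 * (2 * zc) = 2 * (1 - fps_X^2)"
proof -
  have "(1 + fps_X)^2 * (2 * zc) = 2 * (1 + fps_X) * ((1 + fps_X) * zc)" by (simp only: power2_eq_square mult_ac)
  also have "\<dots> = 2 * (1 + fps_X) * (1 - fps_X)" by (simp only: zX)
  also have "\<dots> = 2 * (1 - fps_X^2)" by (simp add: power2_eq_square algebra_simps)
  finally show ?thesis .
qed

lemma tri_b: "yc^(N+1) = (-2)^(N+1) * fps_X^(2*N+2) * iP^(N+1)"
proof -
  have "yc^(N+1) = (-2)^(N+1) * (fps_X^2)^(N+1) * iP^(N+1)"
    by (simp only: yc_def rp_def power_mult_distrib mult.assoc)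
  also have "(fps_X^2)^(N+1) = (fps_X^(2*N+2) :: real fps)"
  proof -
    have "2*N+2 = 2*(N+1)" by simp
    thus ?thesis by (simp only: power_mult)
  qed
  finally show ?thesis .
qed

lemma tri_Psi: "Psi (\<lambda>s. Aseq s * (-2)^s) N = 2 * (1 - fps_X^2) - fps_X^(2*N+2) * ((1 + fps_X)^2 * (-2)^(N+1) * iP^(N+1) * (zc*(1+zc)) * fz N zc)"
proof -
  have "Psi (\<lambda>s. Aseq s * (-2)^s) N = (1 + fps_X)^2 * (\<Sum>s\<le>N. fps_const (Aseq s) * yc^s * (1 + zc^(s+2)))"
    unfolding Psi_def sum_distrib_left by (intro sum.cong refl) (rule term_eq[symmetric])
  also have "\<dots> = (1 + fps_X)^2 * (2 * zc) - (1 + fps_X)^2 * (yc^(N+1) * (zc*(1+zc)) * fz N zc)"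
    by (simp only: tri_T right_diff_distrib)
  also have "\<dots> = 2 * (1 - fps_X^2) - (1 + fps_X)^2 * (((-2)^(N+1) * fps_X^(2*N+2) * iP^(N+1)) * (zc*(1+zc)) * fz N zc)"
    by (simp only: tri_a tri_b)
  also have "\<dots> = 2 * (1 - fps_X^2) - fps_X^(2*N+2) * ((1 + fps_X)^2 * (-2)^(N+1) * iP^(N+1) * (zc*(1+zc)) * fz N zc)"
    by (simp only: mult_ac)
  finally show ?thesis .
qed

lemma Xpow_nth0: "j < k \<Longrightarrow> (fps_X^k * (K :: real fps)) $ j = 0"
  by (simp add: fps_X_power_mult_nth)

lemma tri_side: assumes j: "j < 2*N+2"
  shows "Psi (\<lambda>s. Aseq s * (-2)^s) N $ j = (2 * (1 - fps_X^2)) $ j"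
proof -
  have "Psi (\<lambda>s. Aseq s * (-2)^s) N $ j = (2 * (1 - fps_X^2)) $ j - (fps_X^(2*N+2) * ((1 + fps_X)^2 * (-2)^(N+1) * iP^(N+1) * (zc*(1+zc)) * fz N zc)) $ j"
    by (simp only: tri_Psi fps_sub_nth)
  also have "(fps_X^(2*N+2) * ((1 + fps_X)^2 * (-2)^(N+1) * iP^(N+1) * (zc*(1+zc)) * fz N zc)) $ j = 0"
    by (rule Xpow_nth0) (use j in simp)
  finally show ?thesis by (simp only: diff_zero)
qed


lemma lam_M: "lam s = (-1)^s * median_genocchi s"
proof -
  have e: "[:1,2:] * ww^(s+1) = ww^(s+1) + smult 2 ([:0,1:] * ww^(s+1))"
    by (simp add: smult_add_left)
  have "lam s = ell (ww^(s+1)) + 2 * ell ([:0,1:] * ww^(s+1))"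
    unfolding lam_def e by (simp only: ell_add ell_smult)
  hence "lam s = 2 * ell ([:0,1:] * ww^(s+1))" by (simp only: ell_ww_pow add_0)
  have m1: "(-1::real)^s * (-1)^s = 1"
  proof -
    have "(-1::real)^s * (-1)^s = ((-1) * (-1))^s" by (rule power_mult_distrib[symmetric])
    thus ?thesis by simp
  qed
  have "(-1)^s * median_genocchi s = 2 * ell ([:0,1:] * ww^(s+1)) * ((-1)^s * (-1)^s)"
    by (simp only: ell_genocchi mult_ac)
  thus ?thesis using \<open>lam s = 2 * ell ([:0,1:] * ww^(s+1))\<close> m1 by simp
qed

lemma Aseq_M: "Aseq s = median_genocchi s / 2^s"
proof -
  have "Aseq s * (-2)^s = lam s"
    using uniq[of "\<lambda>s. Aseq s * (-2)^s" lam s, OF tri_side Bern_side] by simp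
  moreover have "(-2::real)^s = (-1)^s * 2^s"
  proof -
    have "(-2::real) = (-1) * 2" by simp
    hence "(-2::real)^s = ((-1) * 2)^s" by (simp only:)
    also have "\<dots> = (-1)^s * 2^s" by (rule power_mult_distrib)
    finally show ?thesis .
  qed
  ultimately have "Aseq s * ((-1)^s * 2^s) = (-1)^s * median_genocchi s"
    by (simp only: lam_M)
  hence "(-1)^s * (Aseq s * 2^s) = (-1)^s * median_genocchi s"
    by (simp only: mult_ac)
  hence "Aseq s * 2^s = median_genocchi s"
    using mult_left_cancel[of "(-1::real)^s" "Aseq s * 2^s" "median_genocchi s"] by simp
  thus ?thesis by (simp add: field_simps)
qed


theorem theorem5p5:
  shows "(\<forall>i. summable (\<lambda>n. real (walksB n i 0) / 2 ^ n)) \<and>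
    QB_x0_half = Abs_fps (\<lambda>n. median_genocchi n / 2 ^ n) \<and>
    Abs_fps (\<lambda>n. median_genocchi n / 2 ^ n) =
      Abs_fps (\<lambda>n. 2 * (- 1 / 2) ^ n * (\<Sum>k = 0..n+1. real ((n+1) choose k) *
        (2 ^ (n+k+2) - 1) * bernoulli (n+k+2)))"
proof (intro conjI)
  have w: "walksB n i 0 = wal n (int i, 0)" for n i by (simp add: walksB_wal)
  show "\<forall>i. summable (\<lambda>n. real (walksB n i 0) / 2 ^ n)"
    by (simp add: w summable_wal)
  show "QB_x0_half = Abs_fps (\<lambda>n. median_genocchi n / 2 ^ n)"
  proof (rule fps_ext)
    fix i
    have "QB_x0_half $ i = Fv (int i, 0)" by (simp add: QB_x0_half_def w Fv_def)
    also have "\<dots> = Aseq i" by (simp add: Aseq_def Fv_sym)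
    also have "\<dots> = median_genocchi i / 2 ^ i" by (rule Aseq_M)
    finally show "QB_x0_half $ i = Abs_fps (\<lambda>n. median_genocchi n / 2 ^ n) $ i" by simp
  qed
  show "Abs_fps (\<lambda>n. median_genocchi n / 2 ^ n) =
      Abs_fps (\<lambda>n. 2 * (- 1 / 2) ^ n * (\<Sum>k = 0..n+1. real ((n+1) choose k) *
        (2 ^ (n+k+2) - 1) * bernoulli (n+k+2)))"
  proof (rule fps_ext)
    fix n
    define S where "S = (\<Sum>k = 0..n+1. real ((n+1) choose k) * (2 ^ (n+k+2) - 1) * bernoulli (n+k+2))"
    have h: "(- 1 / 2 :: real)^n = (-1)^n / 2^n" by (rule power_divide)
    have "median_genocchi n / 2 ^ n = 2 * (- 1 / 2) ^ n * S"
      unfolding median_genocchi_def S_def[symmetric] h by simp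
    thus "Abs_fps (\<lambda>n. median_genocchi n / 2 ^ n) $ n =
      Abs_fps (\<lambda>n. 2 * (- 1 / 2) ^ n * (\<Sum>k = 0..n+1. real ((n+1) choose k) *
        (2 ^ (n+k+2) - 1) * bernoulli (n+k+2))) $ n" by (simp only: fps_nth_Abs_fps S_def)
  qed
qed


end
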